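(* Under the setting of the algorithm in the context, for every initial state $\theta_0$, $\theta(k)$ converges to $\theta_\infty\mathbf{1}_n$ in mean square, where $\theta_\infty=\mathrm{Ave}(\theta_0)+\sum_{i=1}^n\frac{s_i}{n}\sum_{j=0}^\infty\eta_i(j)$.
   Context: $n$ agents communicate over an undirected connected weighted graph with symmetric nonnegative adjacency matrix $A$, weighted degree matrix $D=\mathrm{diag}(A\mathbf{1}_n)$, Laplacian $L=D-A$, and maximal weighted degree $d_{\max}$. $\mathrm{Ave}(x)=\frac1n\mathbf{1}_n^Tx$. The algorithm is $$\theta(k+1)=\theta(k)-hLx(k)+S\eta(k),\qquad x(k)=\theta(k)+\eta(k),\qquad \theta(0)=\theta_0,$$ where $0<h<1/d_{\max}$, $S=\mathrm{diag}(s_1,\dots,s_n)$ with $s_i\in(0,2)$, and the noises $\eta_i(k)$ are mutually independent with $\eta_i(k)\sim\mathrm{Lap}(c_iq_i^k)$ (zero-mean Laplace with density $\frac{1}{2b}e^{-|x|/b}$), $c_i>0$, $q_i\in(|s_i-1|,1)$. *)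

theory Defs
  imports "HOL-Probability.Probability"
begin

text \<open>Agents are indexed by a finite type 'n; vectors are functions 'n => real.\<close>

definition wdeg :: "('n::finite \<Rightarrow> 'n \<Rightarrow> real) \<Rightarrow> 'n \<Rightarrow> real" where
  "wdeg A i = (\<Sum>j\<in>UNIV. A i j)"

definition dmax :: "('n::finite \<Rightarrow> 'n \<Rightarrow> real) \<Rightarrow> real" where
  "dmax A = Max (range (wdeg A))"

definition laplacian_mult :: "('n::finite \<Rightarrow> 'n \<Rightarrow> real) \<Rightarrow> ('n \<Rightarrow> real) \<Rightarrow> 'n \<Rightarrow> real" where
  "laplacian_mult A x i = wdeg A i * x i - (\<Sum>j\<in>UNIV. A i j * x j)"

definition graph_connected :: "('n \<Rightarrow> 'n \<Rightarrow> real) \<Rightarrow> bool" where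
  "graph_connected A \<longleftrightarrow> (\<forall>i j. (i, j) \<in> {(a, b). A a b > 0}\<^sup>*)"

definition Ave :: "('n::finite \<Rightarrow> real) \<Rightarrow> real" where
  "Ave x = (\<Sum>i\<in>UNIV. x i) / real CARD('n)"

definition laplace_density :: "real \<Rightarrow> real \<Rightarrow> real" where
  "laplace_density b x = exp (- \<bar>x\<bar> / b) / (2 * b)"

text \<open>The iteration theta(k+1) = theta(k) - h L x(k) + S eta(k), x(k) = theta(k) + eta(k),
  for a given (realised) noise sequence eta i k.\<close>
fun theta :: "('n::finite \<Rightarrow> 'n \<Rightarrow> real) \<Rightarrow> real \<Rightarrow> ('n \<Rightarrow> real) \<Rightarrow> ('n \<Rightarrow> real)
    \<Rightarrow> ('n \<Rightarrow> nat \<Rightarrow> real) \<Rightarrow> nat \<Rightarrow> 'n \<Rightarrow> real" where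
  "theta A h s theta0 eta 0 = theta0"
| "theta A h s theta0 eta (Suc k) =
     (\<lambda>i. theta A h s theta0 eta k i
          - h * laplacian_mult A (\<lambda>j. theta A h s theta0 eta k j + eta j k) i
          + s i * eta i k)"

end

theory Submission
  imports Defs
begin

lemma ennreal_half: "0 \<le> a \<Longrightarrow> ennreal (a/2) = ennreal a / 2"
  by (metis divide_ennreal ennreal_numeral zero_less_numeral)
lemma ennreal_half_sum: "0 \<le> a \<Longrightarrow> 0 \<le> c \<Longrightarrow> ennreal (a/2 + c/2) = ennreal a / 2 + ennreal c / 2"
  by (metis divide_ennreal divide_nonneg_pos ennreal_numeral ennreal_plus zero_less_numeral)

lemma laplace_second_moment:
  assumes d: "distributed M lborel X (\<lambda>x. ennreal (laplace_density b x))" and b: "0 < b"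
  shows "(\<integral>\<^sup>+\<omega>. ennreal ((X \<omega>)\<^sup>2) \<partial>M) = ennreal (2*b\<^sup>2)"
proof -
  define l where "l = 1/b"
  have l: "0 < l" using b by (simp add: l_def)
  have eq: "ennreal (laplace_density b x) * ennreal (x\<^sup>2) =
      ennreal (erlang_density 0 l x * x ^ 2) / 2 + ennreal (erlang_density 0 l (0 + (-1) * x) * (0 + (-1) * x) ^ 2) / 2" for x
  proof -
    have "laplace_density b x * x\<^sup>2 = (erlang_density 0 l x * x ^ 2) / 2 + (erlang_density 0 l (0 + (-1) * x) * (0 + (-1) * x) ^ 2) / 2"
      using b by (auto simp: laplace_density_def erlang_density_def l_def abs_if field_simps)
    moreover have "0 \<le> laplace_density b x" using b by (simp add: laplace_density_def)
    moreover have "0 \<le> erlang_density 0 l y" for y using l by (simp add: erlang_density_def)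
    ultimately show ?thesis
      by (simp add: ennreal_mult[symmetric] ennreal_half)
  qed
  have "(\<integral>\<^sup>+\<omega>. ennreal ((X \<omega>)\<^sup>2) \<partial>M) = (\<integral>\<^sup>+x. ennreal (laplace_density b x) * ennreal (x\<^sup>2) \<partial>lborel)"
    by (rule distributed_nn_integral[OF d, symmetric]) simp
  also have "\<dots> = (\<integral>\<^sup>+x. ennreal (erlang_density 0 l x * x ^ 2) / 2 \<partial>lborel) +
     (\<integral>\<^sup>+x. ennreal (erlang_density 0 l (0 + (-1) * x) * (0 + (-1) * x) ^ 2) / 2 \<partial>lborel)"
    unfolding eq by (rule nn_integral_add) (auto simp: erlang_density_def)
  also have "(\<integral>\<^sup>+x. ennreal (erlang_density 0 l (0 + (-1) * x) * (0 + (-1) * x) ^ 2) / 2 \<partial>lborel)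
      = (\<integral>\<^sup>+x. ennreal (erlang_density 0 l x * x ^ 2) / 2 \<partial>lborel)"
    using nn_integral_real_affine[of "\<lambda>x. ennreal (erlang_density 0 l x * x ^ 2) / 2" "-1" 0]
    by (simp add: erlang_density_def)
  also have "(\<integral>\<^sup>+x. ennreal (erlang_density 0 l x * x ^ 2) / 2 \<partial>lborel) =
     (\<integral>\<^sup>+x. ennreal (erlang_density 0 l x * x ^ 2) \<partial>lborel) / 2"
    by (simp add: divide_ennreal_def nn_integral_multc erlang_density_def)
  also have "(\<integral>\<^sup>+x. ennreal (erlang_density 0 l x * x ^ 2) \<partial>lborel) = ennreal (2 / l^2)"
    using nn_integral_erlang_ith_moment[OF l, of 0 2] by simp
  finally show ?thesis using l b
    by (simp add: l_def power_divide ennreal_half[symmetric] ennreal_plus[symmetric] del: ennreal_plus)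
qed



definition GG :: "('n::finite \<Rightarrow> 'n \<Rightarrow> real) \<Rightarrow> ('n \<Rightarrow> real) \<Rightarrow> real" where
  "GG A x = (\<Sum>i\<in>UNIV. \<Sum>j\<in>UNIV. A i j * (x i - x j)\<^sup>2)"

definition VV :: "('n::finite \<Rightarrow> real) \<Rightarrow> real" where
  "VV x = (\<Sum>i\<in>UNIV. (x i - Ave x)\<^sup>2)"

lemma lap_alt: "laplacian_mult A x i = (\<Sum>j\<in>UNIV. A i j * (x i - x j))"
  by (simp add: laplacian_mult_def wdeg_def sum_distrib_right sum_subtractf right_diff_distrib)

lemma sum_lap:
  assumes sym: "\<And>i j. A i j = A j i"
  shows "(\<Sum>i\<in>UNIV. laplacian_mult A x i) = 0"
proof -
  have "(\<Sum>i\<in>UNIV. \<Sum>j\<in>UNIV. A i j * x j) = (\<Sum>j\<in>UNIV. \<Sum>i\<in>UNIV. A j i * x j)"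
    by (subst sum.swap) (simp add: sym)
  also have "\<dots> = (\<Sum>j\<in>UNIV. wdeg A j * x j)" by (simp add: wdeg_def sum_distrib_right)
  finally show ?thesis by (simp add: laplacian_mult_def sum_subtractf)
qed

lemma lap_shift: "laplacian_mult A (\<lambda>j. x j + c) = laplacian_mult A x"
  by (rule ext) (simp add: lap_alt)

lemma quad:
  assumes sym: "\<And>i j. A i j = A j i"
  shows "(\<Sum>i\<in>UNIV. x i * laplacian_mult A x i) = GG A x / 2"
proof -
  have e1: "(\<Sum>i\<in>UNIV. x i * laplacian_mult A x i) = (\<Sum>i\<in>UNIV. \<Sum>j\<in>UNIV. A i j * x i * (x i - x j))"
    by (simp add: lap_alt sum_distrib_left mult.assoc mult.left_commute)
  have e2: "(\<Sum>i\<in>UNIV. \<Sum>j\<in>UNIV. A i j * x i * (x i - x j)) = (\<Sum>i\<in>UNIV. \<Sum>j\<in>UNIV. - (A i j * x j * (x i - x j)))"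
    by (subst sum.swap) (simp add: sym algebra_simps)
  have "GG A x = (\<Sum>i\<in>UNIV. \<Sum>j\<in>UNIV. A i j * x i * (x i - x j) + (- (A i j * x j * (x i - x j))))"
    unfolding GG_def by (intro sum.cong refl) (simp add: power2_eq_square algebra_simps)
  also have "\<dots> = 2 * (\<Sum>i\<in>UNIV. x i * laplacian_mult A x i)"
    by (simp only: sum.distrib e1 e2[symmetric])
  finally show ?thesis by simp
qed

lemma wdeg_le: "wdeg A i \<le> dmax A"
  unfolding dmax_def by (rule Max_ge) auto

lemma wdeg_nonneg: "(\<And>i j. A i j \<ge> 0) \<Longrightarrow> 0 \<le> wdeg A i"
  unfolding wdeg_def by (simp add: sum_nonneg)

lemma dmax_nonneg: "(\<And>i j. A i j \<ge> 0) \<Longrightarrow> 0 \<le> dmax A"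
  using wdeg_le wdeg_nonneg order_trans by metis

lemma weighted_cs:
  fixes a y :: "'j \<Rightarrow> real"
  assumes "\<And>j. 0 \<le> a j"
  shows "(\<Sum>j\<in>I. a j * y j)\<^sup>2 \<le> (\<Sum>j\<in>I. a j) * (\<Sum>j\<in>I. a j * (y j)\<^sup>2)"
proof -
  have "(\<Sum>j\<in>I. sqrt (a j) * (sqrt (a j) * y j))\<^sup>2 \<le> (\<Sum>j\<in>I. (sqrt (a j))\<^sup>2) * (\<Sum>j\<in>I. (sqrt (a j) * y j)\<^sup>2)"
    by (rule Cauchy_Schwarz_ineq_sum)
  moreover have "sqrt (a j) * (sqrt (a j) * y j) = a j * y j" for j
    using assms[of j] by (simp add: mult.assoc[symmetric])
  moreover have "(sqrt (a j) * y j)\<^sup>2 = a j * (y j)\<^sup>2" for j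
    using assms[of j] by (simp add: power_mult_distrib)
  ultimately show ?thesis using assms by simp
qed

lemma lap_sq:
  assumes nonneg: "\<And>i j. A i j \<ge> 0"
  shows "(\<Sum>i\<in>UNIV. (laplacian_mult A x i)\<^sup>2) \<le> dmax A * GG A x"
proof -
  have "(laplacian_mult A x i)\<^sup>2 \<le> dmax A * (\<Sum>j\<in>UNIV. A i j * (x i - x j)\<^sup>2)" for i
  proof -
    have "(laplacian_mult A x i)\<^sup>2 \<le> wdeg A i * (\<Sum>j\<in>UNIV. A i j * (x i - x j)\<^sup>2)"
      unfolding lap_alt wdeg_def by (rule weighted_cs) (simp add: nonneg)
    also have "\<dots> \<le> dmax A * (\<Sum>j\<in>UNIV. A i j * (x i - x j)\<^sup>2)"
      by (intro mult_right_mono wdeg_le sum_nonneg) (simp add: nonneg)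
    finally show ?thesis .
  qed
  then show ?thesis unfolding GG_def sum_distrib_left by (intro sum_mono) auto
qed

lemma sum_sq_le: "(\<Sum>i\<in>(UNIV::'n::finite set). y i)\<^sup>2 \<le> real CARD('n) * (\<Sum>i\<in>UNIV. (y i)\<^sup>2)"
  using weighted_cs[of "\<lambda>_. 1" y UNIV] by simp

lemma pyth:
  fixes x :: "'n::finite \<Rightarrow> real"
  shows "(\<Sum>i\<in>UNIV. (x i - c)\<^sup>2) = VV x + real CARD('n) * (Ave x - c)\<^sup>2"
proof -
  have n: "real CARD('n) > 0" by simp
  have s: "(\<Sum>i\<in>UNIV. x i) = real CARD('n) * Ave x" using n by (simp add: Ave_def)
  have "(\<Sum>i\<in>UNIV. (x i - c)\<^sup>2) = (\<Sum>i\<in>UNIV. (x i - Ave x)\<^sup>2 + 2 * (Ave x - c) * x i + ((Ave x - c)\<^sup>2 - 2 * (Ave x - c) * Ave x))"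
    by (intro sum.cong refl) (simp add: power2_eq_square algebra_simps)
  also have "\<dots> = VV x + 2 * (Ave x - c) * (\<Sum>i\<in>UNIV. x i) + real CARD('n) * ((Ave x - c)\<^sup>2 - 2 * (Ave x - c) * Ave x)"
    by (simp add: sum.distrib sum_distrib_left VV_def)
  also have "\<dots> = VV x + real CARD('n::finite) * (Ave x - c)\<^sup>2"
    unfolding s by (simp add: algebra_simps)
  finally show ?thesis .
qed

lemma VV_le:
  fixes x :: "'n::finite \<Rightarrow> real"
  shows "VV x \<le> (\<Sum>i\<in>UNIV. (x i)\<^sup>2)"
proof -
  have "0 \<le> real CARD('n) * (Ave x)\<^sup>2" by simp
  moreover have "(\<Sum>i\<in>UNIV. (x i)\<^sup>2) = VV x + real CARD('n) * (Ave x)\<^sup>2" using pyth[of x 0] by simp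
  ultimately show ?thesis by linarith
qed



lemma GG_nonneg: "(\<And>i j. A i j \<ge> 0) \<Longrightarrow> 0 \<le> GG A x"
  unfolding GG_def by (intro sum_nonneg) simp

lemma VV_nonneg: "0 \<le> VV x"
  unfolding VV_def by (intro sum_nonneg) simp

lemma GG_term:
  assumes nonneg: "\<And>i j. A i j \<ge> 0"
  shows "A i j * (x i - x j)\<^sup>2 \<le> GG A x"
proof -
  have "A i j * (x i - x j)\<^sup>2 \<le> (\<Sum>j\<in>UNIV. A i j * (x i - x j)\<^sup>2)"
    by (rule member_le_sum) (auto simp: nonneg)
  also have "\<dots> \<le> GG A x" unfolding GG_def
    by (rule member_le_sum[where f="\<lambda>i. \<Sum>j\<in>UNIV. A i j * (x i - x j)\<^sup>2"]) (auto simp: nonneg intro!: sum_nonneg)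
  finally show ?thesis .
qed

lemma sq_sum_le: "((a::real) + b)\<^sup>2 \<le> 2 * a\<^sup>2 + 2 * b\<^sup>2"
proof -
  have "0 \<le> (a - b)\<^sup>2" by simp
  then show ?thesis unfolding power2_diff power2_sum by linarith
qed

lemma conn_pair:
  fixes A :: "'n::finite \<Rightarrow> 'n \<Rightarrow> real"
  assumes nonneg: "\<And>i j. A i j \<ge> 0"
    and p: "(i, j) \<in> {(a, b). A a b > 0}\<^sup>*"
  shows "\<exists>C\<ge>0. \<forall>x. (x i - x j)\<^sup>2 \<le> C * GG A x"
  using p
proof (induction rule: rtrancl_induct)
  case base
  show ?case by (rule exI[of _ 0]) simp
next
  case (step y z)
  then obtain C where C: "C \<ge> 0" "\<And>x. (x i - x y)\<^sup>2 \<le> C * GG A x" by blast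
  have a: "A y z > 0" using step by simp
  have "(x i - x z)\<^sup>2 \<le> (2 * C + 2 / A y z) * GG A x" for x
  proof -
    have t: "A y z * (x y - x z)\<^sup>2 \<le> GG A x" by (rule GG_term[OF nonneg])
    then have t': "(x y - x z)\<^sup>2 \<le> GG A x / A y z" using a by (simp add: field_simps)
    have "(x i - x z)\<^sup>2 \<le> 2 * (x i - x y)\<^sup>2 + 2 * (x y - x z)\<^sup>2"
      using sq_sum_le[of "x i - x y" "x y - x z"] by simp
    also have "\<dots> \<le> 2 * (C * GG A x) + 2 * (GG A x / A y z)"
      using C(2)[of x] t' by linarith
    finally show ?thesis by (simp add: algebra_simps)
  qed
  then show ?case using C a by (intro exI[of _ "2 * C + 2 / A y z"]) auto
qed

lemma conn_bound:
  fixes A :: "'n::finite \<Rightarrow> 'n \<Rightarrow> real"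
  assumes nonneg: "\<And>i j. A i j \<ge> 0" and conn: "graph_connected A"
  shows "\<exists>K>0. \<forall>x. VV x \<le> K * GG A x"
proof -
  define C where "C i j = (SOME c. c \<ge> 0 \<and> (\<forall>x. (x i - x j)\<^sup>2 \<le> c * GG A x))" for i j
  have C: "C i j \<ge> 0 \<and> (\<forall>x. (x i - x j)\<^sup>2 \<le> C i j * GG A x)" for i j
    unfolding C_def
    by (rule someI_ex) (use conn_pair[of A, OF nonneg] conn in \<open>auto simp: graph_connected_def\<close>)
  define K where "K = (\<Sum>i\<in>UNIV. \<Sum>j\<in>UNIV. C i j) + 1"
  have K0: "(\<Sum>i\<in>UNIV. \<Sum>j\<in>UNIV. C i j) \<ge> 0" using C by (simp add: sum_nonneg)
  have "VV x \<le> K * GG A x" for x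
  proof -
    have n: "real CARD('n) \<ge> 1" by simp
    have "(x i - Ave x)\<^sup>2 \<le> (\<Sum>j\<in>UNIV. (x i - x j)\<^sup>2)" for i
    proof -
      have e: "x i - Ave x = (\<Sum>j\<in>UNIV. x i - x j) / real CARD('n)"
        using n by (simp add: Ave_def sum_subtractf field_simps)
      have "(x i - Ave x)\<^sup>2 = (\<Sum>j\<in>UNIV. x i - x j)\<^sup>2 / (real CARD('n))\<^sup>2"
        unfolding e by (simp add: power_divide)
      also have "\<dots> \<le> real CARD('n) * (\<Sum>j\<in>UNIV. (x i - x j)\<^sup>2) / (real CARD('n))\<^sup>2"
        by (intro divide_right_mono sum_sq_le) simp
      also have "\<dots> = (\<Sum>j\<in>UNIV. (x i - x j)\<^sup>2) / real CARD('n)"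
        by (simp add: power2_eq_square)
      also have "\<dots> \<le> (\<Sum>j\<in>UNIV. (x i - x j)\<^sup>2)"
      proof -
        have S0: "0 \<le> (\<Sum>j\<in>UNIV. (x i - x j)\<^sup>2)" by (auto intro: sum_nonneg)
        have "(\<Sum>j\<in>UNIV. (x i - x j)\<^sup>2) * 1 \<le> (\<Sum>j\<in>UNIV. (x i - x j)\<^sup>2) * real CARD('n)"
          by (rule mult_left_mono[OF n S0])
        then show ?thesis using n by (simp add: divide_le_eq)
      qed
      finally show ?thesis .
    qed
    then have "VV x \<le> (\<Sum>i\<in>UNIV. \<Sum>j\<in>UNIV. (x i - x j)\<^sup>2)"
      unfolding VV_def by (rule sum_mono)
    also have "\<dots> \<le> (\<Sum>i\<in>UNIV. \<Sum>j\<in>UNIV. C i j * GG A x)"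
      using C by (intro sum_mono) auto
    also have "\<dots> = (\<Sum>i\<in>UNIV. \<Sum>j\<in>UNIV. C i j) * GG A x"
      by (simp add: sum_distrib_right)
    also have "\<dots> \<le> K * GG A x"
      unfolding K_def using GG_nonneg[of A x, OF nonneg] by (intro mult_right_mono) auto
    finally show ?thesis .
  qed
  moreover have "K > 0" using K0 by (simp add: K_def)
  ultimately show ?thesis by blast
qed



lemma GG_shift: "GG A (\<lambda>j. x j + c) = GG A x"
  by (simp add: GG_def)

lemma Ave_lap_step:
  fixes A :: "'n::finite \<Rightarrow> 'n \<Rightarrow> real"
  assumes sym: "\<And>i j. A i j = A j i"
  shows "Ave (\<lambda>i. x i - h * laplacian_mult A y i + w i) = Ave x + Ave w"
proof -
  have "(\<Sum>i\<in>UNIV. x i - h * laplacian_mult A y i + w i) = (\<Sum>i\<in>UNIV. x i) - h * (\<Sum>i\<in>UNIV. laplacian_mult A y i) + (\<Sum>i\<in>UNIV. w i)"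
    by (simp add: sum.distrib sum_subtractf sum_distrib_left)
  then show ?thesis using sum_lap[of A y, OF sym] by (simp add: Ave_def add_divide_distrib diff_divide_distrib)
qed

lemma contraction:
  fixes A :: "'n::finite \<Rightarrow> 'n \<Rightarrow> real"
  assumes sym: "\<And>i j. A i j = A j i" and nonneg: "\<And>i j. A i j \<ge> 0"
    and conn: "graph_connected A" and h_pos: "0 < h" and h_lt: "h * dmax A < 1"
  shows "\<exists>\<rho>. 0 \<le> \<rho> \<and> \<rho> < 1 \<and> (\<forall>x. VV (\<lambda>i. x i - h * laplacian_mult A x i) \<le> \<rho> * VV x)"
proof -
  obtain K where K: "K > 0" "\<And>x. VV x \<le> K * GG A x" using conn_bound[of A, OF nonneg conn] by blast
  define \<kappa> where "\<kappa> = h * (1 - h * dmax A) / K"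
  have \<kappa>: "\<kappa> > 0" using K h_pos h_lt by (simp add: \<kappa>_def)
  define \<rho> where "\<rho> = max 0 (1 - \<kappa>)"
  have "VV (\<lambda>i. x i - h * laplacian_mult A x i) \<le> \<rho> * VV x" for x
  proof -
    define a where "a = Ave x"
    define y where "y = (\<lambda>j. x j + (- a))"
    have Ly: "laplacian_mult A y = laplacian_mult A x" unfolding y_def by (rule lap_shift)
    have Gy: "GG A y = GG A x" unfolding y_def by (rule GG_shift)
    have Au: "Ave (\<lambda>i. x i - h * laplacian_mult A x i) = a"
      using Ave_lap_step[of A x h x "\<lambda>_. 0", OF sym] by (simp add: a_def Ave_def)
    have VVx: "VV x = (\<Sum>i\<in>UNIV. (y i)\<^sup>2)" by (simp add: VV_def y_def a_def)
    have "VV (\<lambda>i. x i - h * laplacian_mult A x i) = (\<Sum>i\<in>UNIV. (y i - h * laplacian_mult A y i)\<^sup>2)"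
      unfolding VV_def Au Ly by (simp add: y_def algebra_simps)
    also have "\<dots> = (\<Sum>i\<in>UNIV. (y i)\<^sup>2) - 2 * h * (\<Sum>i\<in>UNIV. y i * laplacian_mult A y i)
        + h\<^sup>2 * (\<Sum>i\<in>UNIV. (laplacian_mult A y i)\<^sup>2)"
      by (simp add: power2_diff sum.distrib sum_subtractf sum_distrib_left power_mult_distrib algebra_simps)
    also have "\<dots> = VV x - h * GG A x + h\<^sup>2 * (\<Sum>i\<in>UNIV. (laplacian_mult A x i)\<^sup>2)"
      using quad[of A y, OF sym] by (simp add: VVx Gy Ly)
    also have "\<dots> \<le> VV x - h * GG A x + h\<^sup>2 * (dmax A * GG A x)"
      using lap_sq[of A x, OF nonneg] by (intro add_left_mono mult_left_mono) auto
    also have "\<dots> = VV x - h * (1 - h * dmax A) * GG A x" by (simp add: power2_eq_square algebra_simps)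
    also have "\<dots> \<le> VV x - h * (1 - h * dmax A) * (VV x / K)"
    proof -
      have "VV x / K \<le> GG A x" using K by (simp add: divide_le_eq mult.commute)
      moreover have "0 \<le> h * (1 - h * dmax A)" using h_pos h_lt by simp
      ultimately have "h * (1 - h * dmax A) * (VV x / K) \<le> h * (1 - h * dmax A) * GG A x"
        by (rule mult_left_mono)
      then show ?thesis by linarith
    qed
    also have "\<dots> = (1 - \<kappa>) * VV x" using K by (simp add: \<kappa>_def field_simps)
    also have "\<dots> \<le> \<rho> * VV x" unfolding \<rho>_def by (intro mult_right_mono VV_nonneg) auto
    finally show ?thesis .
  qed
  moreover have "0 \<le> \<rho>" "\<rho> < 1" using \<kappa> by (auto simp: \<rho>_def)
  ultimately show ?thesis by blast
qed



lemma lap_add: "laplacian_mult A (\<lambda>j. x j + y j) i = laplacian_mult A x i + laplacian_mult A y i"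
  by (simp add: laplacian_mult_def algebra_simps sum.distrib)

lemma sq_eps: "0 < (\<epsilon>::real) \<Longrightarrow> (a + b)\<^sup>2 \<le> (1 + \<epsilon>) * a\<^sup>2 + (1 + 1/\<epsilon>) * b\<^sup>2"
proof -
  assume e: "0 < \<epsilon>"
  have "0 \<le> (sqrt \<epsilon> * a - b / sqrt \<epsilon>)\<^sup>2" by simp
  also have "\<dots> = \<epsilon> * a\<^sup>2 - 2 * a * b + b\<^sup>2 / \<epsilon>"
    using e by (simp add: power2_diff power_mult_distrib power_divide)
  finally show ?thesis by (simp add: power2_sum algebra_simps add_divide_distrib)
qed

lemma Ave_add: "Ave (\<lambda>i. u i + w i) = Ave u + Ave w"
  by (simp add: Ave_def sum.distrib add_divide_distrib)

lemma VV_add: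
  assumes e: "0 < \<epsilon>"
  shows "VV (\<lambda>i. u i + w i) \<le> (1 + \<epsilon>) * VV u + (1 + 1/\<epsilon>) * VV w"
proof -
  have "VV (\<lambda>i. u i + w i) = (\<Sum>i\<in>UNIV. ((u i - Ave u) + (w i - Ave w))\<^sup>2)"
    unfolding VV_def Ave_add by (simp add: algebra_simps)
  also have "\<dots> \<le> (\<Sum>i\<in>UNIV. (1 + \<epsilon>) * (u i - Ave u)\<^sup>2 + (1 + 1/\<epsilon>) * (w i - Ave w)\<^sup>2)"
    by (intro sum_mono sq_eps e)
  also have "\<dots> = (1 + \<epsilon>) * VV u + (1 + 1/\<epsilon>) * VV w"
    by (simp add: VV_def sum.distrib sum_distrib_left)
  finally show ?thesis .
qed

lemma GG_le:
  fixes A :: "'n::finite \<Rightarrow> 'n \<Rightarrow> real"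
  assumes sym: "\<And>i j. A i j = A j i" and nonneg: "\<And>i j. A i j \<ge> 0"
  shows "GG A x \<le> 4 * dmax A * (\<Sum>i\<in>UNIV. (x i)\<^sup>2)"
proof -
  have "GG A x \<le> (\<Sum>i\<in>UNIV. \<Sum>j\<in>UNIV. A i j * (2 * (x i)\<^sup>2) + A i j * (2 * (x j)\<^sup>2))"
    unfolding GG_def
  proof (intro sum_mono)
    fix i j
    have "(x i - x j)\<^sup>2 \<le> 2 * (x i)\<^sup>2 + 2 * (x j)\<^sup>2" using sq_sum_le[of "x i" "- x j"] by simp
    then have "A i j * (x i - x j)\<^sup>2 \<le> A i j * (2 * (x i)\<^sup>2 + 2 * (x j)\<^sup>2)"
      by (rule mult_left_mono) (rule nonneg)
    then show "A i j * (x i - x j)\<^sup>2 \<le> A i j * (2 * (x i)\<^sup>2) + A i j * (2 * (x j)\<^sup>2)"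
      by (simp only: distrib_left)
  qed
  also have "\<dots> = (\<Sum>i\<in>UNIV. \<Sum>j\<in>UNIV. A i j * (2 * (x i)\<^sup>2)) + (\<Sum>i\<in>UNIV. \<Sum>j\<in>UNIV. A i j * (2 * (x j)\<^sup>2))"
    by (simp only: sum.distrib)
  also have "(\<Sum>i\<in>UNIV. \<Sum>j\<in>UNIV. A i j * (2 * (x i)\<^sup>2)) = (\<Sum>i\<in>UNIV. wdeg A i * (2 * (x i)\<^sup>2))"
    by (simp add: wdeg_def sum_distrib_right)
  also have "(\<Sum>i\<in>UNIV. \<Sum>j\<in>UNIV. A i j * (2 * (x j)\<^sup>2)) = (\<Sum>j\<in>UNIV. \<Sum>i\<in>UNIV. A j i * (2 * (x j)\<^sup>2))"
    by (subst sum.swap) (simp add: sym)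
  also have "\<dots> = (\<Sum>i\<in>UNIV. wdeg A i * (2 * (x i)\<^sup>2))"
    by (simp add: wdeg_def sum_distrib_right)
  also have "(\<Sum>i\<in>UNIV. wdeg A i * (2 * (x i)\<^sup>2)) \<le> (\<Sum>i\<in>UNIV. dmax A * (2 * (x i)\<^sup>2))"
    by (intro sum_mono mult_right_mono wdeg_le) auto
  finally show ?thesis by (simp add: sum_distrib_left mult.assoc)
qed

lemma theta_Suc_eq:
  "theta A h s t0 e (Suc k) = (\<lambda>i. (theta A h s t0 e k i - h * laplacian_mult A (theta A h s t0 e k) i)
      + (s i * e i k - h * laplacian_mult A (\<lambda>j. e j k) i))"
  by (rule ext) (simp add: lap_add algebra_simps)

lemma Ave_theta_Suc:
  fixes A :: "'n::finite \<Rightarrow> 'n \<Rightarrow> real"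
  assumes sym: "\<And>i j. A i j = A j i"
  shows "Ave (theta A h s t0 e (Suc k)) = Ave (theta A h s t0 e k) + (\<Sum>i\<in>UNIV. s i / real CARD('n) * e i k)"
proof -
  have "Ave (theta A h s t0 e (Suc k)) = Ave (theta A h s t0 e k) + Ave (\<lambda>i. s i * e i k)"
    using Ave_lap_step[of A "theta A h s t0 e k" h "\<lambda>j. theta A h s t0 e k j + e j k" "\<lambda>i. s i * e i k", OF sym]
    by simp
  then show ?thesis by (simp add: Ave_def sum_divide_distrib)
qed

lemma Ave_theta:
  fixes A :: "'n::finite \<Rightarrow> 'n \<Rightarrow> real"
  assumes sym: "\<And>i j. A i j = A j i"
  shows "Ave (theta A h s t0 e k) = Ave t0 + (\<Sum>i\<in>UNIV. s i / real CARD('n) * (\<Sum>j<k. e i j))"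
proof (induction k)
  case 0
  then show ?case by simp
next
  case (Suc k)
  have "Ave (theta A h s t0 e (Suc k)) = Ave (theta A h s t0 e k) + (\<Sum>i\<in>UNIV. s i / real CARD('n) * e i k)"
    by (rule Ave_theta_Suc[OF sym])
  also have "\<dots> = Ave t0 + (\<Sum>i\<in>UNIV. s i / real CARD('n) * (\<Sum>j<k. e i j) + s i / real CARD('n) * e i k)"
    unfolding Suc.IH by (simp add: sum.distrib)
  also have "\<dots> = Ave t0 + (\<Sum>i\<in>UNIV. s i / real CARD('n) * (\<Sum>j<Suc k. e i j))"
    by (simp add: distrib_left)
  finally show ?case .
qed

lemma noise_step:
  fixes A :: "'n::finite \<Rightarrow> 'n \<Rightarrow> real"
  assumes sym: "\<And>i j. A i j = A j i" and nonneg: "\<And>i j. A i j \<ge> 0"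
    and conn: "graph_connected A" and h_pos: "0 < h" and h_lt: "h * dmax A < 1"
    and s_range: "\<And>i. 0 < s i \<and> s i < 2"
  shows "\<exists>\<rho> D. 0 \<le> \<rho> \<and> \<rho> < 1 \<and> 0 \<le> D \<and> (\<forall>t0 e k.
     VV (theta A h s t0 e (Suc k)) \<le> \<rho> * VV (theta A h s t0 e k) + D * (\<Sum>i\<in>UNIV. (e i k)\<^sup>2))"
proof -
  obtain \<rho> where \<rho>: "0 \<le> \<rho>" "\<rho> < 1" "\<And>x. VV (\<lambda>i. x i - h * laplacian_mult A x i) \<le> \<rho> * VV x"
    using contraction[of A h, OF sym nonneg conn h_pos h_lt] by blast
  define \<epsilon> where "\<epsilon> = (1 - \<rho>) / 2"
  have \<epsilon>: "0 < \<epsilon>" using \<rho> by (simp add: \<epsilon>_def)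
  define D where "D = (1 + 1/\<epsilon>) * (8 + 8 * h\<^sup>2 * (dmax A)\<^sup>2)"
  have D: "0 \<le> D" using \<epsilon> by (simp add: D_def)
  have dm: "0 \<le> dmax A" using dmax_nonneg[of A, OF nonneg] .
  have wb: "VV (\<lambda>i. s i * x i - h * laplacian_mult A x i) \<le> (8 + 8 * h\<^sup>2 * (dmax A)\<^sup>2) * (\<Sum>i\<in>UNIV. (x i)\<^sup>2)" for x
  proof -
    have "VV (\<lambda>i. s i * x i - h * laplacian_mult A x i) \<le> (\<Sum>i\<in>UNIV. (s i * x i + (- h * laplacian_mult A x i))\<^sup>2)"
      using VV_le[of "\<lambda>i. s i * x i - h * laplacian_mult A x i"] by simp
    also have "\<dots> \<le> (\<Sum>i\<in>UNIV. 2 * (s i * x i)\<^sup>2 + 2 * (- h * laplacian_mult A x i)\<^sup>2)"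
      by (intro sum_mono sq_sum_le)
    also have "\<dots> = (\<Sum>i\<in>UNIV. 2 * (s i)\<^sup>2 * (x i)\<^sup>2) + 2 * h\<^sup>2 * (\<Sum>i\<in>UNIV. (laplacian_mult A x i)\<^sup>2)"
      by (simp add: sum.distrib sum_distrib_left power_mult_distrib algebra_simps)
    also have "\<dots> \<le> (\<Sum>i\<in>UNIV. 8 * (x i)\<^sup>2) + 2 * h\<^sup>2 * (dmax A * (4 * dmax A * (\<Sum>i\<in>UNIV. (x i)\<^sup>2)))"
    proof (intro add_mono mult_left_mono sum_mono)
      fix i
      have "(s i)\<^sup>2 \<le> 2\<^sup>2" using s_range[of i] by (intro power_mono) auto
      then show "2 * (s i)\<^sup>2 * (x i)\<^sup>2 \<le> 8 * (x i)\<^sup>2" by (intro mult_right_mono) auto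
    next
      show "(\<Sum>i\<in>UNIV. (laplacian_mult A x i)\<^sup>2) \<le> dmax A * (4 * dmax A * (\<Sum>i\<in>UNIV. (x i)\<^sup>2))"
        using lap_sq[of A x, OF nonneg] GG_le[of A x, OF sym nonneg] mult_left_mono[OF _ dm] order_trans
        by blast
    qed auto
    finally show ?thesis by (simp add: sum_distrib_left power2_eq_square algebra_simps)
  qed
  have st: "\<forall>t0 e k. VV (theta A h s t0 e (Suc k)) \<le> ((1 + \<epsilon>) * \<rho>) * VV (theta A h s t0 e k) + D * (\<Sum>i\<in>UNIV. (e i k)\<^sup>2)"
  proof (intro allI)
    fix t0 e k
    let ?x = "theta A h s t0 e k"
    have "VV (theta A h s t0 e (Suc k)) \<le> (1 + \<epsilon>) * VV (\<lambda>i. ?x i - h * laplacian_mult A ?x i)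
        + (1 + 1/\<epsilon>) * VV (\<lambda>i. s i * e i k - h * laplacian_mult A (\<lambda>j. e j k) i)"
      unfolding theta_Suc_eq by (rule VV_add[OF \<epsilon>])
    also have "\<dots> \<le> (1 + \<epsilon>) * (\<rho> * VV ?x) + (1 + 1/\<epsilon>) * ((8 + 8 * h\<^sup>2 * (dmax A)\<^sup>2) * (\<Sum>i\<in>UNIV. (e i k)\<^sup>2))"
      using \<epsilon> by (intro add_mono mult_left_mono \<rho>(3) wb) auto
    finally show "VV (theta A h s t0 e (Suc k)) \<le> ((1 + \<epsilon>) * \<rho>) * VV (theta A h s t0 e k) + D * (\<Sum>i\<in>UNIV. (e i k)\<^sup>2)"
      by (simp add: D_def)
  qed
  moreover have "0 \<le> (1 + \<epsilon>) * \<rho>" using \<epsilon> \<rho> by simp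
  moreover have "(1 + \<epsilon>) * \<rho> < 1"
  proof -
    have "(1 + \<epsilon>) * \<rho> = \<rho> + \<rho> * (1 - \<rho>) / 2" by (simp add: \<epsilon>_def algebra_simps)
    also have "\<dots> \<le> \<rho> + (1 - \<rho>) / 2" using \<rho> by (simp add: mult_left_le_one_le)
    also have "\<dots> < 1" using \<rho>(2) by (simp add: field_simps)
    finally show ?thesis .
  qed
  ultimately show ?thesis using D st by (intro exI[of _ "(1 + \<epsilon>) * \<rho>"] exI[of _ D]) simp
qed



lemma decay:
  fixes \<beta> b :: "nat \<Rightarrow> real"
  assumes r0: "0 \<le> \<rho>" and r1: "\<rho> < 1" and nn: "\<And>k. 0 \<le> \<beta> k"
    and rec: "\<And>k. \<beta> (Suc k) \<le> \<rho> * \<beta> k + b k" and b: "b \<longlonglongrightarrow> 0"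
  shows "\<beta> \<longlonglongrightarrow> 0"
proof (rule LIMSEQ_I)
  fix r :: real assume r: "0 < r"
  have "0 < r * (1 - \<rho>) / 2" using r r1 by simp
  then obtain N where N: "\<And>k. k \<ge> N \<Longrightarrow> norm (b k - 0) < r * (1 - \<rho>) / 2"
    using LIMSEQ_D[OF b] by blast
  have cl: "\<beta> (N + j) \<le> \<rho> ^ j * \<beta> N + r / 2" for j
  proof (induction j)
    case 0 then show ?case using r by simp
  next
    case (Suc j)
    have bb: "b (N + j) \<le> r * (1 - \<rho>) / 2" using N[of "N + j"] by simp
    have "\<beta> (N + Suc j) \<le> \<rho> * \<beta> (N + j) + b (N + j)" using rec[of "N + j"] by simp
    also have "\<dots> \<le> \<rho> * (\<rho> ^ j * \<beta> N + r / 2) + r * (1 - \<rho>) / 2"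
      using Suc.IH bb r0 by (intro add_mono mult_left_mono) auto
    also have "\<dots> = \<rho> ^ Suc j * \<beta> N + r / 2" by (simp add: field_simps)
    finally show ?case .
  qed
  have "(\<lambda>j. \<rho> ^ j * \<beta> N) \<longlonglongrightarrow> 0 * \<beta> N"
    by (intro tendsto_mult LIMSEQ_power_zero tendsto_const) (use r0 r1 in auto)
  then have "(\<lambda>j. \<rho> ^ j * \<beta> N) \<longlonglongrightarrow> 0" by simp
  from LIMSEQ_D[OF this, of "r/2"] r obtain M where M: "\<And>j. j \<ge> M \<Longrightarrow> norm (\<rho> ^ j * \<beta> N - 0) < r / 2"
    by auto
  show "\<exists>no. \<forall>n\<ge>no. norm (\<beta> n - 0) < r"
  proof (intro exI allI impI)
    fix n assume n: "N + M \<le> n"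
    define j where "j = n - N"
    have j: "n = N + j" "j \<ge> M" using n by (auto simp: j_def)
    have "\<beta> n \<le> \<rho> ^ j * \<beta> N + r / 2" using cl j by simp
    moreover have "\<rho> ^ j * \<beta> N < r / 2" using M[OF j(2)] by simp
    ultimately show "norm (\<beta> n - 0) < r" using nn[of n] by simp
  qed
qed

lemma weighted_cs2:
  fixes a y :: "'j \<Rightarrow> real"
  assumes "\<And>j. 0 \<le> a j"
  shows "(\<Sum>j\<in>I. a j * y j)\<^sup>2 \<le> (\<Sum>j\<in>I. a j) * (\<Sum>j\<in>I. a j * (y j)\<^sup>2)"
proof -
  have "(\<Sum>j\<in>I. sqrt (a j) * (sqrt (a j) * y j))\<^sup>2 \<le> (\<Sum>j\<in>I. (sqrt (a j))\<^sup>2) * (\<Sum>j\<in>I. (sqrt (a j) * y j)\<^sup>2)"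
    by (rule Cauchy_Schwarz_ineq_sum)
  moreover have "sqrt (a j) * (sqrt (a j) * y j) = a j * y j" for j
    using assms[of j] by (simp add: mult.assoc[symmetric])
  moreover have "(sqrt (a j) * y j)\<^sup>2 = a j * (y j)\<^sup>2" for j
    using assms[of j] by (simp add: power_mult_distrib)
  ultimately show ?thesis using assms by simp
qed

lemma series_cs:
  fixes a w :: "nat \<Rightarrow> real"
  assumes w: "\<And>j. 0 < w j" and sw: "summable w" and sa: "summable (\<lambda>j. (a j)\<^sup>2 / w j)"
  shows "summable a \<and> (\<Sum>j. a j)\<^sup>2 \<le> (\<Sum>j. w j) * (\<Sum>j. (a j)\<^sup>2 / w j)"
proof -
  have le: "norm (a j) \<le> (w j + (a j)\<^sup>2 / w j) / 2" for j
  proof -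
    have "0 \<le> (\<bar>a j\<bar> - w j)\<^sup>2" by simp
    then have "2 * \<bar>a j\<bar> * w j \<le> (w j)\<^sup>2 + (a j)\<^sup>2" by (simp add: power2_diff)
    then show ?thesis using w[of j] by (simp add: field_simps power2_eq_square)
  qed
  have "summable (\<lambda>j. (w j + (a j)\<^sup>2 / w j) / 2)"
    by (intro summable_divide summable_add sw sa)
  then have sabs: "summable (\<lambda>j. norm (a j))"
    by (rule summable_comparison_test[rotated]) (use le in auto)
  then have s: "summable a" by (rule summable_norm_cancel)
  have part: "(\<Sum>j<n. a j)\<^sup>2 \<le> (\<Sum>j. w j) * (\<Sum>j. (a j)\<^sup>2 / w j)" for n
  proof -
    have "(\<Sum>j<n. a j)\<^sup>2 = (\<Sum>j<n. w j * (a j / w j))\<^sup>2" using w by (simp add: less_imp_neq[THEN not_sym])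
    also have "\<dots> \<le> (\<Sum>j<n. w j) * (\<Sum>j<n. w j * (a j / w j)\<^sup>2)"
      by (rule weighted_cs2) (use w in \<open>simp add: less_imp_le\<close>)
    also have "(\<Sum>j<n. w j * (a j / w j)\<^sup>2) = (\<Sum>j<n. (a j)\<^sup>2 / w j)"
      using w by (intro sum.cong refl) (simp add: power2_eq_square field_simps less_imp_neq[THEN not_sym])
    also have "(\<Sum>j<n. w j) * (\<Sum>j<n. (a j)\<^sup>2 / w j) \<le> (\<Sum>j. w j) * (\<Sum>j. (a j)\<^sup>2 / w j)"
      using w by (intro mult_mono sum_le_suminf sw sa sum_nonneg suminf_nonneg) (auto simp: less_imp_le)
    finally show ?thesis .
  qed
  have "(\<lambda>n. (\<Sum>j<n. a j)\<^sup>2) \<longlonglongrightarrow> (\<Sum>j. a j)\<^sup>2"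
    by (intro tendsto_power summable_LIMSEQ s)
  then have "(\<Sum>j. a j)\<^sup>2 \<le> (\<Sum>j. w j) * (\<Sum>j. (a j)\<^sup>2 / w j)"
    by (rule LIMSEQ_le_const2) (use part in auto)
  then show ?thesis using s by simp
qed



lemma theta_measurable:
  assumes m: "\<And>i j. (\<lambda>\<omega>. \<eta> i j \<omega>) \<in> borel_measurable M"
  shows "(\<lambda>\<omega>. theta A h s t0 (\<lambda>i j. \<eta> i j \<omega>) k i) \<in> borel_measurable M"
proof (induction k arbitrary: i)
  case 0 then show ?case by simp
next
  case (Suc k)
  show ?case using Suc m by (simp add: laplacian_mult_def) measurable
qed

lemma err_pointwise:
  fixes e :: "'n::finite \<Rightarrow> nat \<Rightarrow> real" and A :: "'n \<Rightarrow> 'n \<Rightarrow> real"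
  assumes sym: "\<And>i j. A i j = A j i" and q: "\<And>i. 0 < q i \<and> q i < 1"
    and s_range: "\<And>i. 0 < s i \<and> s i < 2"
  shows "ennreal (\<Sum>i\<in>UNIV. (theta A h s t0 e k i - (Ave t0 + (\<Sum>i\<in>UNIV. s i / real CARD('n) * (\<Sum>j. e i j))))\<^sup>2)
    \<le> ennreal (VV (theta A h s t0 e k)) + (\<Sum>i\<in>UNIV. ennreal (4 * q i ^ k / (1 - q i)) * (\<Sum>j. ennreal ((e i (j + k))\<^sup>2 / q i ^ (j + k))))"
    (is "ennreal ?err \<le> ?rhs")
proof (cases "\<forall>i. (\<Sum>j. ennreal ((e i (j + k))\<^sup>2 / q i ^ (j + k))) \<noteq> top")
  case False
  then obtain i0 where i0: "(\<Sum>j. ennreal ((e i0 (j + k))\<^sup>2 / q i0 ^ (j + k))) = top" by blast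
  have pos: "ennreal (4 * q i0 ^ k / (1 - q i0)) \<noteq> 0" using q[of i0] by simp
  have "top = ennreal (4 * q i0 ^ k / (1 - q i0)) * (\<Sum>j. ennreal ((e i0 (j + k))\<^sup>2 / q i0 ^ (j + k)))"
    using i0 pos by simp
  also have "\<dots> \<le> (\<Sum>i\<in>UNIV. ennreal (4 * q i ^ k / (1 - q i)) * (\<Sum>j. ennreal ((e i (j + k))\<^sup>2 / q i ^ (j + k))))"
    by (rule member_le_sum[where f="\<lambda>i. ennreal (4 * q i ^ k / (1 - q i)) * (\<Sum>j. ennreal ((e i (j + k))\<^sup>2 / q i ^ (j + k)))"]) auto
  also have "\<dots> \<le> ?rhs" by simp
  finally have "top \<le> ?rhs" .
  then have "?rhs = top" using top_unique by blast
  then show ?thesis by (simp only: top_greatest)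
next
  case True
  define n where "n = real CARD('n)"
  have n: "n \<ge> 1" by (simp add: n_def)
  define R where "R i = (\<Sum>j. (e i (j + k))\<^sup>2 / q i ^ (j + k))" for i
  define T where "T i = (\<Sum>j. e i (j + k))" for i
  have qq: "0 < q i" "q i < 1" for i using q[of i] by auto
  have nnR: "0 \<le> (e i (j + k))\<^sup>2 / q i ^ (j + k)" for i j using qq[of i] by simp
  have sumR: "summable (\<lambda>j. (e i (j + k))\<^sup>2 / q i ^ (j + k))" for i
    by (rule summable_suminf_not_top) (use nnR True in auto)
  have R: "(\<Sum>j. ennreal ((e i (j + k))\<^sup>2 / q i ^ (j + k))) = ennreal (R i)" for i
    unfolding R_def by (rule suminf_ennreal2[OF nnR sumR])
  have R0: "0 \<le> R i" for i unfolding R_def by (intro suminf_nonneg sumR nnR)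
  have geo: "(\<lambda>j. q i ^ (j + k)) sums (q i ^ k / (1 - q i))" for i
  proof -
    have "(\<lambda>j. q i ^ k * q i ^ j) sums (q i ^ k * (1 / (1 - q i)))"
      by (intro sums_mult geometric_sums) (use qq[of i] in auto)
    then show ?thesis by (simp add: power_add mult.commute)
  qed
  have cs: "summable (\<lambda>j. e i (j + k)) \<and> (T i)\<^sup>2 \<le> (q i ^ k / (1 - q i)) * R i" for i
    using series_cs[of "\<lambda>j. q i ^ (j + k)" "\<lambda>j. e i (j + k)"] qq[of i] sums_summable[OF geo] sumR[of i] geo[of i]
    unfolding T_def R_def by (simp add: sums_iff)
  have se: "summable (e i)" for i using cs[of i] summable_iff_shift[of "e i" k] by simp
  have split: "(\<Sum>j. e i j) = T i + (\<Sum>j<k. e i j)" for i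
    unfolding T_def using suminf_split_initial_segment[OF se[of i], of k] by simp
  define \<theta>inf where "\<theta>inf = Ave t0 + (\<Sum>i\<in>UNIV. s i / real CARD('n) * (\<Sum>j. e i j))"
  have dif: "Ave (theta A h s t0 e k) - \<theta>inf = - (\<Sum>i\<in>UNIV. s i / n * T i)"
    unfolding Ave_theta[OF sym] \<theta>inf_def split n_def by (simp add: distrib_left sum.distrib)
  have "?err = VV (theta A h s t0 e k) + n * (\<Sum>i\<in>UNIV. s i / n * T i)\<^sup>2"
    using pyth[of "theta A h s t0 e k" \<theta>inf] dif unfolding \<theta>inf_def n_def by simp
  also have "n * (\<Sum>i\<in>UNIV. s i / n * T i)\<^sup>2 \<le> n * (n * (\<Sum>i\<in>UNIV. (s i / n * T i)\<^sup>2))"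
    using sum_sq_le[of "\<lambda>i. s i / n * T i"] n unfolding n_def by (intro mult_left_mono) auto
  also have "\<dots> = (\<Sum>i\<in>UNIV. (s i)\<^sup>2 * (T i)\<^sup>2)"
    using n by (simp add: sum_distrib_left power_mult_distrib power_divide power2_eq_square mult_ac)
  also have "\<dots> \<le> (\<Sum>i\<in>UNIV. 4 * q i ^ k / (1 - q i) * R i)"
  proof (intro sum_mono)
    fix i
    have "(s i)\<^sup>2 \<le> 2\<^sup>2" using s_range[of i] by (intro power_mono) auto
    then have "(s i)\<^sup>2 * (T i)\<^sup>2 \<le> 4 * (T i)\<^sup>2" by (intro mult_right_mono) auto
    also have "\<dots> \<le> 4 * ((q i ^ k / (1 - q i)) * R i)" using cs[of i] by simp
    finally show "(s i)\<^sup>2 * (T i)\<^sup>2 \<le> 4 * q i ^ k / (1 - q i) * R i" by simp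
  qed
  finally have le: "?err \<le> VV (theta A h s t0 e k) + (\<Sum>i\<in>UNIV. 4 * q i ^ k / (1 - q i) * R i)"
    by simp
  have c0: "0 \<le> 4 * q i ^ k / (1 - q i)" for i using qq[of i] by simp
  have c1: "0 \<le> 4 * q i ^ k / (1 - q i) * R i" for i by (intro mult_nonneg_nonneg c0 R0)
  have "ennreal ?err \<le> ennreal (VV (theta A h s t0 e k) + (\<Sum>i\<in>UNIV. 4 * q i ^ k / (1 - q i) * R i))"
    using le by (rule ennreal_leI)
  also have "\<dots> = ennreal (VV (theta A h s t0 e k)) + ennreal (\<Sum>i\<in>UNIV. 4 * q i ^ k / (1 - q i) * R i)"
    by (rule ennreal_plus) (rule VV_nonneg, rule sum_nonneg, rule c1)
  also have "ennreal (\<Sum>i\<in>UNIV. 4 * q i ^ k / (1 - q i) * R i) = (\<Sum>i\<in>UNIV. ennreal (4 * q i ^ k / (1 - q i) * R i))"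
    by (rule sum_ennreal[symmetric]) (rule c1)
  also have "(\<Sum>i\<in>UNIV. ennreal (4 * q i ^ k / (1 - q i) * R i)) = (\<Sum>i\<in>UNIV. ennreal (4 * q i ^ k / (1 - q i)) * (\<Sum>j. ennreal ((e i (j + k))\<^sup>2 / q i ^ (j + k))))"
    by (intro sum.cong refl) (subst ennreal_mult[OF c0 R0], subst R, rule refl)
  finally show ?thesis .
qed



lemma ennreal_div_split: "0 \<le> y \<Longrightarrow> ennreal (x / y) = ennreal x * ennreal (1 / y)"
  using ennreal_mult''[of "1/y" x] by simp

lemma ennreal_lin2:
  assumes "0 \<le> a" "0 \<le> x" "0 \<le> b" "0 \<le> (y::real)"
  shows "ennreal (a * x + b * y) = ennreal a * ennreal x + ennreal b * ennreal y"
proof -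
  have "ennreal (a * x + b * y) = ennreal (a * x) + ennreal (b * y)"
    by (rule ennreal_plus) (use assms in auto)
  also have "\<dots> = ennreal a * ennreal x + ennreal b * ennreal y"
    using assms by (simp add: ennreal_mult)
  finally show ?thesis .
qed

theorem mainTheorem3:
  fixes M :: "'a measure"
    and A :: "'n::finite \<Rightarrow> 'n \<Rightarrow> real"
    and h :: real
    and s c q :: "'n \<Rightarrow> real"
    and \<eta> :: "'n \<Rightarrow> nat \<Rightarrow> 'a \<Rightarrow> real"
    and \<theta>0 :: "'n \<Rightarrow> real"
  assumes "prob_space M"
    and sym: "\<And>i j. A i j = A j i"
    and nonneg: "\<And>i j. A i j \<ge> 0"
    and conn: "graph_connected A"
    and h_pos: "0 < h" and h_lt: "h * dmax A < 1"
    and s_range: "\<And>i. 0 < s i \<and> s i < 2"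
    and c_pos: "\<And>i. 0 < c i"
    and q_range: "\<And>i. \<bar>s i - 1\<bar> < q i \<and> q i < 1"
    and indep: "prob_space.indep_vars M (\<lambda>_. borel) (\<lambda>(i, k). \<eta> i k) UNIV"
    and lap: "\<And>i k. distributed M lborel (\<eta> i k)
                 (\<lambda>x. ennreal (laplace_density (c i * q i ^ k) x))"
  shows "let \<theta>inf = (\<lambda>\<omega>. Ave \<theta>0 + (\<Sum>i\<in>UNIV. s i / real CARD('n) * (\<Sum>j. \<eta> i j \<omega>)));
             err = (\<lambda>k \<omega>. \<Sum>i\<in>UNIV. (theta A h s \<theta>0 (\<lambda>i j. \<eta> i j \<omega>) k i - \<theta>inf \<omega>)\<^sup>2)
         in (\<forall>k. integrable M (err k)) \<and>
            (\<lambda>k. prob_space.expectation M (err k)) \<longlonglongrightarrow> 0"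
proof -
  interpret P: prob_space M by fact
  have m\<eta>[measurable]: "\<And>i k. \<eta> i k \<in> borel_measurable M"
    using distributed_measurable[OF lap] by simp
  have qq: "0 < q i" "q i < 1" for i using q_range[of i] by auto
  have bpos: "0 < c i * q i ^ k" for i k using c_pos[of i] qq[of i] by simp
  have mom: "(\<integral>\<^sup>+\<omega>. ennreal ((\<eta> i k \<omega>)\<^sup>2) \<partial>M) = ennreal (2 * (c i * q i ^ k)\<^sup>2)" for i k
    by (rule laplace_second_moment[OF lap bpos])
  obtain \<rho> D where \<rho>D: "0 \<le> \<rho>" "\<rho> < 1" "0 \<le> D"
    "\<And>t0 e k. VV (theta A h s t0 e (Suc k)) \<le> \<rho> * VV (theta A h s t0 e k) + D * (\<Sum>i\<in>UNIV. (e i k)\<^sup>2)"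
    using noise_step[of A h s, OF sym nonneg conn h_pos h_lt s_range] by blast
  define E where "E k = (\<Sum>i\<in>UNIV. 2 * (c i * q i ^ k)\<^sup>2)" for k
  define \<beta> where "\<beta> = rec_nat (VV \<theta>0) (\<lambda>k b. \<rho> * b + D * E k)"
  have \<beta>0: "\<beta> 0 = VV \<theta>0" and \<beta>S: "\<beta> (Suc k) = \<rho> * \<beta> k + D * E k" for k
    by (simp_all add: \<beta>_def)
  have E0: "0 \<le> E k" for k unfolding E_def by (intro sum_nonneg) simp
  have \<beta>nn: "0 \<le> \<beta> k" for k
    by (induction k) (simp_all add: \<beta>0 \<beta>S VV_nonneg \<rho>D E0)
  have Elim: "E \<longlonglongrightarrow> 0"
  proof -
    have "(\<lambda>k. 2 * (c i)\<^sup>2 * ((q i)\<^sup>2) ^ k) \<longlonglongrightarrow> 2 * (c i)\<^sup>2 * 0" for i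
      by (intro tendsto_mult tendsto_const LIMSEQ_power_zero) (use qq[of i] in \<open>auto simp: power_less_one_iff\<close>)
    then have "(\<lambda>k. \<Sum>i\<in>UNIV. 2 * (c i)\<^sup>2 * ((q i)\<^sup>2) ^ k) \<longlonglongrightarrow> (\<Sum>i\<in>(UNIV::'n set). 0)"
      by (intro tendsto_sum) simp
    then show ?thesis unfolding E_def by (simp add: power_mult_distrib power_mult[symmetric] mult_ac)
  qed
  have \<beta>lim: "\<beta> \<longlonglongrightarrow> 0"
  proof (rule decay[OF \<rho>D(1,2) \<beta>nn])
    show "\<beta> (Suc k) \<le> \<rho> * \<beta> k + D * E k" for k by (simp add: \<beta>S)
    show "(\<lambda>k. D * E k) \<longlonglongrightarrow> 0" using tendsto_mult[OF tendsto_const Elim, of D] by simp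
  qed
  define \<theta> where "\<theta> k \<omega> = theta A h s \<theta>0 (\<lambda>i j. \<eta> i j \<omega>) k" for k \<omega>
  have m\<theta>[measurable]: "(\<lambda>\<omega>. \<theta> k \<omega> i) \<in> borel_measurable M" for k i
    unfolding \<theta>_def by (rule theta_measurable) simp
  have mV[measurable]: "(\<lambda>\<omega>. VV (\<theta> k \<omega>)) \<in> borel_measurable M" for k
    unfolding VV_def Ave_def by measurable
  have Vint: "(\<integral>\<^sup>+\<omega>. ennreal (VV (\<theta> k \<omega>)) \<partial>M) \<le> ennreal (\<beta> k)" for k
  proof (induction k)
    case 0
    show ?case by (simp add: \<theta>_def \<beta>0 P.emeasure_space_1)
  next
    case (Suc k)
    have pw: "ennreal (VV (\<theta> (Suc k) \<omega>)) \<le> ennreal \<rho> * ennreal (VV (\<theta> k \<omega>)) + ennreal D * ennreal (\<Sum>i\<in>UNIV. (\<eta> i k \<omega>)\<^sup>2)" for \<omega>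
    proof -
      have "ennreal (VV (\<theta> (Suc k) \<omega>)) \<le> ennreal (\<rho> * VV (\<theta> k \<omega>) + D * (\<Sum>i\<in>UNIV. (\<eta> i k \<omega>)\<^sup>2))"
        using \<rho>D(4)[of \<theta>0 "\<lambda>i j. \<eta> i j \<omega>" k] unfolding \<theta>_def by (rule ennreal_leI)
      also have "\<dots> = ennreal \<rho> * ennreal (VV (\<theta> k \<omega>)) + ennreal D * ennreal (\<Sum>i\<in>UNIV. (\<eta> i k \<omega>)\<^sup>2)"
        by (rule ennreal_lin2) (auto simp: \<rho>D VV_nonneg sum_nonneg)
      finally show ?thesis .
    qed
    have N: "(\<integral>\<^sup>+\<omega>. ennreal (\<Sum>i\<in>UNIV. (\<eta> i k \<omega>)\<^sup>2) \<partial>M) = ennreal (E k)"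
    proof -
      have "(\<integral>\<^sup>+\<omega>. ennreal (\<Sum>i\<in>UNIV. (\<eta> i k \<omega>)\<^sup>2) \<partial>M) = (\<integral>\<^sup>+\<omega>. (\<Sum>i\<in>UNIV. ennreal ((\<eta> i k \<omega>)\<^sup>2)) \<partial>M)"
        by (simp add: sum_ennreal)
      also have "\<dots> = (\<Sum>i\<in>UNIV. \<integral>\<^sup>+\<omega>. ennreal ((\<eta> i k \<omega>)\<^sup>2) \<partial>M)"
        by (rule nn_integral_sum) simp
      also have "\<dots> = (\<Sum>i\<in>UNIV. ennreal (2 * (c i * q i ^ k)\<^sup>2))" by (simp only: mom)
      also have "\<dots> = ennreal (E k)" unfolding E_def by (rule sum_ennreal) simp
      finally show ?thesis .
    qed
    have "(\<integral>\<^sup>+\<omega>. ennreal (VV (\<theta> (Suc k) \<omega>)) \<partial>M) \<le>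
        (\<integral>\<^sup>+\<omega>. ennreal \<rho> * ennreal (VV (\<theta> k \<omega>)) + ennreal D * ennreal (\<Sum>i\<in>UNIV. (\<eta> i k \<omega>)\<^sup>2) \<partial>M)"
      by (rule nn_integral_mono) (rule pw)
    also have "\<dots> = ennreal \<rho> * (\<integral>\<^sup>+\<omega>. ennreal (VV (\<theta> k \<omega>)) \<partial>M) + ennreal D * (\<integral>\<^sup>+\<omega>. ennreal (\<Sum>i\<in>UNIV. (\<eta> i k \<omega>)\<^sup>2) \<partial>M)"
      by (simp add: nn_integral_add nn_integral_cmult)
    also have "\<dots> \<le> ennreal \<rho> * ennreal (\<beta> k) + ennreal D * ennreal (E k)"
      unfolding N by (intro add_mono mult_left_mono Suc.IH) auto
    also have "\<dots> = ennreal (\<beta> (Suc k))"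
      unfolding \<beta>S by (rule ennreal_lin2[symmetric]) (auto simp: \<rho>D \<beta>nn E0)
    finally show ?case .
  qed
  define S where "S k i \<omega> = (\<Sum>j. ennreal ((\<eta> i (j + k) \<omega>)\<^sup>2 / q i ^ (j + k)))" for k i \<omega>
  have Sint: "(\<integral>\<^sup>+\<omega>. S k i \<omega> \<partial>M) = ennreal (2 * (c i)\<^sup>2 * q i ^ k / (1 - q i))" for k i
  proof -
    have geo: "(\<lambda>j. 2 * (c i)\<^sup>2 * q i ^ (j + k)) sums (2 * (c i)\<^sup>2 * q i ^ k / (1 - q i))"
    proof -
      have "(\<lambda>j. 2 * (c i)\<^sup>2 * q i ^ k * q i ^ j) sums (2 * (c i)\<^sup>2 * q i ^ k * (1 / (1 - q i)))"
        by (intro sums_mult geometric_sums) (use qq[of i] in auto)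
      then show ?thesis by (simp add: power_add mult_ac)
    qed
    have "(\<integral>\<^sup>+\<omega>. S k i \<omega> \<partial>M) = (\<Sum>j. \<integral>\<^sup>+\<omega>. ennreal ((\<eta> i (j + k) \<omega>)\<^sup>2 / q i ^ (j + k)) \<partial>M)"
      unfolding S_def by (rule nn_integral_suminf) simp
    also have "\<dots> = (\<Sum>j. ennreal (2 * (c i)\<^sup>2 * q i ^ (j + k)))"
    proof (rule suminf_cong)
      fix j
      have "(\<integral>\<^sup>+\<omega>. ennreal ((\<eta> i (j + k) \<omega>)\<^sup>2 / q i ^ (j + k)) \<partial>M)
          = (\<integral>\<^sup>+\<omega>. ennreal ((\<eta> i (j + k) \<omega>)\<^sup>2) * ennreal (1 / q i ^ (j + k)) \<partial>M)"
        by (intro nn_integral_cong ennreal_div_split) (use qq[of i] in simp)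
      also have "\<dots> = ennreal (2 * (c i * q i ^ (j + k))\<^sup>2) * ennreal (1 / q i ^ (j + k))"
        by (simp add: nn_integral_multc mom)
      also have "\<dots> = ennreal (2 * (c i * q i ^ (j + k))\<^sup>2 * (1 / q i ^ (j + k)))"
        by (rule ennreal_mult[symmetric]) (use qq[of i] in auto)
      also have "2 * (c i * q i ^ (j + k))\<^sup>2 * (1 / q i ^ (j + k)) = 2 * (c i)\<^sup>2 * q i ^ (j + k)"
        using qq[of i] by (simp add: power2_eq_square field_simps)
      finally show "(\<integral>\<^sup>+\<omega>. ennreal ((\<eta> i (j + k) \<omega>)\<^sup>2 / q i ^ (j + k)) \<partial>M) = ennreal (2 * (c i)\<^sup>2 * q i ^ (j + k))" .
    qed
    also have "\<dots> = ennreal (\<Sum>j. 2 * (c i)\<^sup>2 * q i ^ (j + k))"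
      by (rule suminf_ennreal2) (use qq[of i] sums_summable[OF geo] in auto)
    also have "\<dots> = ennreal (2 * (c i)\<^sup>2 * q i ^ k / (1 - q i))" using geo by (simp add: sums_iff)
    finally show ?thesis .
  qed
  define \<theta>inf where "\<theta>inf = (\<lambda>\<omega>. Ave \<theta>0 + (\<Sum>i\<in>UNIV. s i / real CARD('n) * (\<Sum>j. \<eta> i j \<omega>)))"
  define err where "err = (\<lambda>k \<omega>. \<Sum>i\<in>UNIV. (theta A h s \<theta>0 (\<lambda>i j. \<eta> i j \<omega>) k i - \<theta>inf \<omega>)\<^sup>2)"
  define bnd where "bnd k = \<beta> k + (\<Sum>i\<in>UNIV. 4 * q i ^ k / (1 - q i) * (2 * (c i)\<^sup>2 * q i ^ k / (1 - q i)))" for k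
  have merr[measurable]: "err k \<in> borel_measurable M" for k
    unfolding err_def \<theta>inf_def Ave_def using m\<theta>[unfolded \<theta>_def] by measurable
  have err0: "0 \<le> err k \<omega>" for k \<omega> unfolding err_def by (intro sum_nonneg) simp
  have errint: "(\<integral>\<^sup>+\<omega>. ennreal (err k \<omega>) \<partial>M) \<le> ennreal (bnd k)" for k
  proof -
    have "(\<integral>\<^sup>+\<omega>. ennreal (err k \<omega>) \<partial>M) \<le> (\<integral>\<^sup>+\<omega>. ennreal (VV (\<theta> k \<omega>)) + (\<Sum>i\<in>UNIV. ennreal (4 * q i ^ k / (1 - q i)) * S k i \<omega>) \<partial>M)"
      by (rule nn_integral_mono)
        (unfold err_def \<theta>inf_def \<theta>_def S_def, rule err_pointwise[OF sym _ s_range], use qq in auto)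
    also have "\<dots> = (\<integral>\<^sup>+\<omega>. ennreal (VV (\<theta> k \<omega>)) \<partial>M) + (\<Sum>i\<in>UNIV. ennreal (4 * q i ^ k / (1 - q i)) * (\<integral>\<^sup>+\<omega>. S k i \<omega> \<partial>M))"
      unfolding S_def by (simp add: nn_integral_add nn_integral_sum nn_integral_cmult)
    also have "\<dots> \<le> ennreal (\<beta> k) + (\<Sum>i\<in>UNIV. ennreal (4 * q i ^ k / (1 - q i)) * ennreal (2 * (c i)\<^sup>2 * q i ^ k / (1 - q i)))"
      unfolding Sint by (intro add_mono Vint order_refl)
    also have "\<dots> = ennreal (bnd k)"
    proof -
      have nn: "0 \<le> 4 * q i ^ k / (1 - q i)" "0 \<le> 2 * (c i)\<^sup>2 * q i ^ k / (1 - q i)" for i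
        using qq[of i] by auto
      have "(\<Sum>i\<in>UNIV. ennreal (4 * q i ^ k / (1 - q i)) * ennreal (2 * (c i)\<^sup>2 * q i ^ k / (1 - q i)))
         = (\<Sum>i\<in>UNIV. ennreal (4 * q i ^ k / (1 - q i) * (2 * (c i)\<^sup>2 * q i ^ k / (1 - q i))))"
        by (intro sum.cong refl) (rule ennreal_mult[OF nn, symmetric])
      also have "\<dots> = ennreal (\<Sum>i\<in>UNIV. 4 * q i ^ k / (1 - q i) * (2 * (c i)\<^sup>2 * q i ^ k / (1 - q i)))"
        by (rule sum_ennreal) (intro mult_nonneg_nonneg nn)
      finally have X: "(\<Sum>i\<in>UNIV. ennreal (4 * q i ^ k / (1 - q i)) * ennreal (2 * (c i)\<^sup>2 * q i ^ k / (1 - q i)))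
         = ennreal (\<Sum>i\<in>UNIV. 4 * q i ^ k / (1 - q i) * (2 * (c i)\<^sup>2 * q i ^ k / (1 - q i)))" .
      show ?thesis unfolding bnd_def X
        by (rule ennreal_plus[symmetric]) (rule \<beta>nn, intro sum_nonneg mult_nonneg_nonneg nn)
    qed
    finally show ?thesis .
  qed
  have int: "integrable M (err k)" for k
    by (rule integrableI_nonneg) (use errint[of k] err0 in \<open>auto simp: le_less_trans\<close>)
  have Ele: "P.expectation (err k) \<le> bnd k" for k
  proof -
    have "ennreal (P.expectation (err k)) = (\<integral>\<^sup>+\<omega>. ennreal (err k \<omega>) \<partial>M)"
      by (rule nn_integral_eq_integral[symmetric]) (use int err0 in auto)
    then have "ennreal (P.expectation (err k)) \<le> ennreal (bnd k)" using errint[of k] by simp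
    moreover have "0 \<le> bnd k" unfolding bnd_def using \<beta>nn[of k] qq
      by (intro add_nonneg_nonneg sum_nonneg mult_nonneg_nonneg) (auto simp: less_imp_le)
    ultimately show ?thesis by simp
  qed
  have Ege: "0 \<le> P.expectation (err k)" for k using err0 by simp
  have bndlim: "bnd \<longlonglongrightarrow> 0"
  proof -
    have "(\<lambda>k. 8 * (c i)\<^sup>2 / (1 - q i)\<^sup>2 * ((q i)\<^sup>2) ^ k) \<longlonglongrightarrow> 8 * (c i)\<^sup>2 / (1 - q i)\<^sup>2 * 0" for i
      by (intro tendsto_mult tendsto_const LIMSEQ_power_zero) (use qq[of i] in \<open>auto simp: power_less_one_iff\<close>)
    then have "(\<lambda>k. \<beta> k + (\<Sum>i\<in>UNIV. 8 * (c i)\<^sup>2 / (1 - q i)\<^sup>2 * ((q i)\<^sup>2) ^ k)) \<longlonglongrightarrow> 0 + (\<Sum>i\<in>(UNIV::'n set). 0)"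
      by (intro tendsto_add \<beta>lim tendsto_sum) simp
    moreover have "4 * q i ^ k / (1 - q i) * (2 * (c i)\<^sup>2 * q i ^ k / (1 - q i)) = 8 * (c i)\<^sup>2 / (1 - q i)\<^sup>2 * ((q i)\<^sup>2) ^ k" for i k
    proof -
      have e1: "((q i)\<^sup>2) ^ k = q i ^ k * q i ^ k" by (simp add: power2_eq_square power_mult_distrib)
      show ?thesis unfolding e1 by (simp add: power2_eq_square)
    qed
    ultimately show ?thesis unfolding bnd_def by simp
  qed
  have lim: "(\<lambda>k. P.expectation (err k)) \<longlonglongrightarrow> 0"
    by (rule tendsto_sandwich[OF _ _ tendsto_const bndlim]) (use Ele Ege in auto)
  show ?thesis unfolding Let_def using int lim unfolding err_def \<theta>inf_def by simp
qed

end
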